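(* Let $f$ be a $C^1$ expanding map of $\mathbf{S}^1$ and $m\ge0$. Denote by $\operatorname{Leb}_N$ the uniform probability measure on $E_N$. Then, as $N\to+\infty$, the measures $((f_N)_* )^m(\operatorname{Leb}_N)$ converge in the weak-* topology to the probability measure on $\mathbf{S}^1$ with density $\mathcal L_f^m1$ with respect to Lebesgue measure, where $1$ is the constant function equal to $1$.
   Context: $\mathbf{S}^1=\mathbf{R}/\mathbf{Z}$; a $C^1$ expanding map is a $C^1$ map $f:\mathbf{S}^1\to\mathbf{S}^1$ with $f'(x)>1$ for every $x$ (for the map $\mathcal D^1$ convention, $f'\ge1$). $E_N=\{i/N:1\le i\le N\}$, $P_N$ sends $x$ to a closest point of $E_N$, $f_N=P_N\circ f|_{E_N}$, and $(f_N)_*$ denotes push-forward of measures by $f_N$. $\mathcal L_f\phi(y)=\sum_{x\in f^{-1}(y)}\phi(x)/f'(x)$ is the transfer operator. *)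

theory Defs
  imports "HOL-Analysis.Analysis"
begin

text \<open>The circle S^1 = R/Z is represented by real numbers modulo 1.
  A map f of S^1 is given by a lift F :: real => real with F(x+1) = F x + d, d integer.
  Functions on S^1 are 1-periodic real functions.\<close>

definition dist_S1 :: "real \<Rightarrow> real \<Rightarrow> real" where
  "dist_S1 x y = (INF k::int. \<bar>x - y - real_of_int k\<bar>)"

definition E :: "nat \<Rightarrow> real set" where
  "E N = {real i / real N | i. 1 \<le> i \<and> i \<le> N}"

definition is_projection :: "(nat \<Rightarrow> real \<Rightarrow> real) \<Rightarrow> bool" where
  "is_projection P \<longleftrightarrow> (\<forall>N\<ge>1. \<forall>x. P N x \<in> E N \<and> (\<forall>e\<in>E N. dist_S1 x (P N x) \<le> dist_S1 x e))"

definition discretization :: "(real \<Rightarrow> real) \<Rightarrow> (nat \<Rightarrow> real \<Rightarrow> real) \<Rightarrow> nat \<Rightarrow> real \<Rightarrow> real" where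
  "discretization F P N x = P N (F x)"

definition C1_expanding_lift :: "(real \<Rightarrow> real) \<Rightarrow> (real \<Rightarrow> real) \<Rightarrow> bool" where
  "C1_expanding_lift F F' \<longleftrightarrow>
     (\<forall>x. (F has_real_derivative F' x) (at x)) \<and> continuous_on UNIV F' \<and>
     (\<forall>x. F' x > 1) \<and> (\<exists>d::int. \<forall>x. F (x + 1) = F x + real_of_int d)"

definition transfer :: "(real \<Rightarrow> real) \<Rightarrow> (real \<Rightarrow> real) \<Rightarrow> (real \<Rightarrow> real) \<Rightarrow> real \<Rightarrow> real" where
  "transfer F F' \<phi> y = (\<Sum>x\<in>{x. 0 \<le> x \<and> x < 1 \<and> F x - y \<in> \<int>}. \<phi> x / F' x)"

text \<open>Integral of phi against the uniform probability measure on E_N pushed forward m times by f_N.\<close>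
definition pushforward_integral :: "(real \<Rightarrow> real) \<Rightarrow> (nat \<Rightarrow> real \<Rightarrow> real) \<Rightarrow> nat \<Rightarrow> nat \<Rightarrow> (real \<Rightarrow> real) \<Rightarrow> real" where
  "pushforward_integral F P m N \<phi> =
     (\<Sum>i=1..N. \<phi> ((discretization F P N ^^ m) (real i / real N))) / real N"

end

theory Submission
  imports Defs
begin


lemma periodic_int:
  fixes g :: "real \<Rightarrow> 'b"
  assumes "\<And>x. g (x + p) = g x"
  shows "g (x + of_int k * p) = g x"
proof -
  have pos: "g (y + real n * p) = g y" for y n
  proof (induction n)
    case (Suc n)
    have "g (y + real (Suc n) * p) = g ((y + real n * p) + p)" by (simp add: algebra_simps)
    also have "\<dots> = g (y + real n * p)" by (rule assms)
    finally show ?case using Suc by simp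
  qed simp
  show ?thesis
  proof (cases "k \<ge> 0")
    case True
    then obtain n where "k = int n" by (metis nonneg_int_cases)
    then show ?thesis using pos by simp
  next
    case False
    define n where "n = nat (-k)"
    then have n: "k = - int n" using False by simp
    have "g (x + of_int k * p) = g (x + of_int k * p + real n * p)" using pos by metis
    also have "\<dots> = g x" using n by simp
    finally show ?thesis .
  qed
qed



locale circ =
  fixes F F' :: "real \<Rightarrow> real" and d :: int
  assumes deriv: "\<And>x. (F has_real_derivative F' x) (at x)"
    and contF': "continuous_on UNIV F'"
    and Fpos: "\<And>x. F' x > 1"
    and Fper: "\<And>x. F (x + 1) = F x + of_int d"
begin

lemma F_shift: "F (x + of_int k) = F x + of_int k * of_int d"
proof -
  have "(\<lambda>x. F x - of_int d * x) (x + of_int k * 1) = (\<lambda>x. F x - of_int d * x) x"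
    by (rule periodic_int) (simp add: Fper algebra_simps)
  then show ?thesis by (simp add: algebra_simps)
qed

lemma F'_per: "F' (x + 1) = F' x"
proof -
  have "((\<lambda>x. F (x + 1)) has_real_derivative F' (x + 1) * 1) (at x)"
    by (rule DERIV_chain2[OF deriv]) (auto intro!: derivative_eq_intros)
  moreover have "((\<lambda>x. F (x + 1)) has_real_derivative F' x) (at x)"
    unfolding Fper by (auto intro!: derivative_eq_intros deriv)
  ultimately show ?thesis using DERIV_unique by fastforce
qed

lemma F'_shift: "F' (x + of_int k) = F' x"
  using periodic_int[of F' 1 x k] F'_per by simp

lemma F_cont: "isCont F x"
  using deriv DERIV_isCont by blast

lemma F_contOn: "continuous_on S F"
  by (simp add: F_cont continuous_at_imp_continuous_on)

lemma F_gap: assumes "a \<le> b" shows "F b - F a \<ge> b - a"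
proof (cases "a < b")
  case True
  from MVT2[OF True, of F F'] deriv obtain z where "F b - F a = (b - a) * F' z" by blast
  moreover have "(b - a) * 1 \<le> (b - a) * F' z" using Fpos[of z] True by (intro mult_left_mono) auto
  ultimately show ?thesis by simp
qed (use assms in auto)

lemma F_strict: "a < b \<Longrightarrow> F a < F b"
  using F_gap[of a b] by simp

lemma F_mono_iff: "F a < F b \<longleftrightarrow> a < b"
  by (metis F_strict not_less_iff_gr_or_eq)

lemma F_inj: "inj F"
  by (metis F_strict injI not_less_iff_gr_or_eq)

lemma d_pos: "d \<ge> 1"
proof -
  have "F (0 + 1) - F 0 \<ge> 1" using F_gap[of 0 1] by simp
  then have "real_of_int d \<ge> 1" using Fper[of 0] by simp
  then show ?thesis by simp
qed

lemma F_surj: "surj F"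
proof -
  have "\<exists>x. F x = v" for v
  proof (cases "v \<ge> F 0")
    case True
    have "F (v - F 0) \<ge> v" using F_gap[of 0 "v - F 0"] True by simp
    then show ?thesis using IVT[of F 0 v "v - F 0"] True F_cont by auto
  next
    case False
    have "F (v - F 0) \<le> v" using F_gap[of "v - F 0" 0] False by simp
    then show ?thesis using IVT[of F "v - F 0" v 0] False F_cont by auto
  qed
  then show ?thesis by (metis surjI)
qed

definition G where "G = inv F"

lemma FG [simp]: "F (G v) = v"
  unfolding G_def using F_surj by (simp add: surj_f_inv_f)

lemma GF [simp]: "G (F x) = x"
  unfolding G_def using F_inj by simp

lemma G_shift: "G (v + of_int k * of_int d) = G v + of_int k"
  by (metis FG GF F_shift)

lemma G_cont: "isCont G v"
proof -
  have "isCont G (F (G v))"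
    by (rule isCont_inverse_function[of 1]) (auto simp: F_cont)
  then show ?thesis by simp
qed

lemma G_contOn: "continuous_on S G"
  by (simp add: G_cont continuous_at_imp_continuous_on)

lemma F'_bound: "\<exists>B>0. \<forall>x. \<bar>F' x\<bar> \<le> B"
proof -
  have "compact (F' ` {0..1})"
    by (rule compact_continuous_image) (auto intro: continuous_on_subset[OF contF'])
  then obtain B where B: "\<forall>y\<in>F' ` {0..1}. norm y \<le> B" using compact_imp_bounded bounded_iff by metis
  have "\<bar>F' x\<bar> \<le> B" for x
  proof -
    have "F' x = F' (x - of_int \<lfloor>x\<rfloor> + of_int \<lfloor>x\<rfloor>)" by simp
    also have "\<dots> = F' (x - of_int \<lfloor>x\<rfloor>)" by (rule F'_shift)
    moreover have "x - of_int \<lfloor>x\<rfloor> \<in> {0..1}"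
      using real_of_int_floor_add_one_gt[of x] floor_le_iff by (auto simp: algebra_simps)
    ultimately show ?thesis using B by force
  qed
  moreover have "B > 0" using Fpos[of 0] calculation[of 0] by simp
  ultimately show ?thesis by blast
qed

lemma F_lip: "\<exists>B>0. \<forall>a b. \<bar>F a - F b\<bar> \<le> B * \<bar>a - b\<bar>"
proof -
  obtain B where B: "B > 0" "\<And>x. \<bar>F' x\<bar> \<le> B" using F'_bound by blast
  have lt: "\<bar>F a - F b\<bar> \<le> B * \<bar>a - b\<bar>" if "a < b" for a b
  proof -
    from MVT2[OF that, of F F'] deriv obtain z where "F b - F a = (b - a) * F' z" by blast
    then have "\<bar>F a - F b\<bar> = \<bar>a - b\<bar> * \<bar>F' z\<bar>" by (metis abs_minus_commute abs_mult)
    also have "\<dots> \<le> \<bar>a - b\<bar> * B" by (rule mult_left_mono) (use B in auto)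
    finally show ?thesis by (simp add: mult.commute)
  qed
  then have "\<bar>F a - F b\<bar> \<le> B * \<bar>a - b\<bar>" for a b
  proof (cases a b rule: linorder_cases)
    case greater
    then have "\<bar>F b - F a\<bar> \<le> B * \<bar>b - a\<bar>" using lt by blast
    then show ?thesis by (simp add: abs_minus_commute)
  qed (use lt in auto)
  with B show ?thesis by blast
qed

end


lemma integrable_cont: "continuous_on UNIV (k::real\<Rightarrow>real) \<Longrightarrow> k integrable_on {a..b}"
  by (rule integrable_continuous_real) (auto intro: continuous_on_subset)

lemma partition_integral:
  fixes k :: "real \<Rightarrow> real"
  assumes k: "continuous_on UNIV k" and s: "s \<ge> 0"
  shows "(\<Sum>j<n. integral {a + real j * s .. a + real (Suc j) * s} k) = integral {a .. a + real n * s} k"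
proof (induction n)
  case 0
  then show ?case by simp
next
  case (Suc n)
  have "(\<Sum>j<Suc n. integral {a + real j * s .. a + real (Suc j) * s} k)
      = integral {a .. a + real n * s} k + integral {a + real n * s .. a + real (Suc n) * s} k"
    using Suc by simp
  also have "\<dots> = integral {a .. a + real (Suc n) * s} k"
    by (rule Henstock_Kurzweil_Integration.integral_combine) (use s in \<open>auto intro!: integrable_cont k mult_right_mono\<close>)
  finally show ?case .
qed

lemma window_integral:
  fixes k :: "real \<Rightarrow> real"
  assumes k: "continuous_on UNIV k" and p: "p > 0" and per: "\<And>x. k (x + p) = k x"
  shows "integral {a..a+p} k = integral {0..p} k"
proof -
  define q where "q = \<lfloor>a / p\<rfloor>"
  define b where "b = a - of_int q * p"
  have "of_int q \<le> a / p" unfolding q_def by simp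
  then have qle: "of_int q * p \<le> a" using p by (simp add: le_divide_eq)
  have "a / p < of_int q + 1" unfolding q_def by (rule real_of_int_floor_add_one_gt)
  then have qgt: "a < (of_int q + 1) * p" using p by (simp add: divide_less_eq)
  have b0: "0 \<le> b" and bp: "b < p" using qle qgt unfolding b_def by (auto simp: algebra_simps)
  have kq: "k \<circ> (\<lambda>x. x + of_int q * p) = k" using periodic_int[of k p] per by (auto simp: o_def)
  have kp: "k \<circ> (\<lambda>x. x + p) = k" using per by (auto simp: o_def)
  have "integral {a..a+p} k = integral {b + of_int q * p .. (b + p) + of_int q * p} k"
    unfolding b_def by (simp add: algebra_simps)
  also have "\<dots> = integral {b..b+p} (k \<circ> (\<lambda>x. x + of_int q * p))"
    by (rule integral_shift[symmetric]) (auto intro: continuous_on_subset[OF k])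
  also have "\<dots> = integral {b..b+p} k" using kq by simp
  also have "\<dots> = integral {b..p} k + integral {p..b+p} k"
    by (rule Henstock_Kurzweil_Integration.integral_combine[symmetric]) (use b0 bp in \<open>auto intro: integrable_cont k\<close>)
  also have "integral {p..b+p} k = integral {0 + p..b+p} k" by simp
  also have "\<dots> = integral {0..b} (k \<circ> (\<lambda>x. x + p))"
    by (rule integral_shift[symmetric]) (auto intro: continuous_on_subset[OF k])
  also have "\<dots> = integral {0..b} k" using kp by simp
  also have "integral {b..p} k + integral {0..b} k = integral {0..p} k"
    using Henstock_Kurzweil_Integration.integral_combine[of 0 b p k] b0 bp integrable_cont[OF k] by (simp add: add.commute)
  finally show ?thesis .
qed



context circ begin

definition hh :: "(real \<Rightarrow> real) \<Rightarrow> real \<Rightarrow> real" where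
  "hh c v = c (G v) / F' (G v)"

lemma transfer_eq:
  assumes cper: "\<And>x. c (x + 1) = c x"
  shows "transfer F F' c u = (\<Sum>j<nat d. hh c (u + real j))"
proof -
  define S where "S = {x. 0 \<le> x \<and> x < 1 \<and> F x - u \<in> \<int>}"
  define \<sigma> where "\<sigma> j = G (u + real j) - of_int \<lfloor>G (u + real j)\<rfloor>" for j :: nat
  have dpos: "d \<ge> 1" by (rule d_pos)
  have Fsig: "F (\<sigma> j) = u + real j - of_int \<lfloor>G (u + real j)\<rfloor> * of_int d" for j
  proof -
    have "F (\<sigma> j) = F (G (u + real j) + of_int (- \<lfloor>G (u + real j)\<rfloor>))"
      unfolding \<sigma>_def by simp
    also have "\<dots> = u + real j - of_int \<lfloor>G (u + real j)\<rfloor> * of_int d"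
      unfolding F_shift by simp
    finally show ?thesis .
  qed
  have inS: "\<sigma> j \<in> S" for j
  proof -
    have "0 \<le> \<sigma> j" "\<sigma> j < 1" unfolding \<sigma>_def
      using real_of_int_floor_add_one_gt[of "G (u + real j)"] by (auto simp: algebra_simps)
    moreover have "F (\<sigma> j) - u \<in> \<int>" unfolding Fsig by auto
    ultimately show ?thesis unfolding S_def by auto
  qed
  have inj: "inj_on \<sigma> {..<nat d}"
  proof (rule inj_onI)
    fix i j assume i: "i \<in> {..<nat d}" and j: "j \<in> {..<nat d}" and eq: "\<sigma> i = \<sigma> j"
    define q where "q = \<lfloor>G (u + real i)\<rfloor> - \<lfloor>G (u + real j)\<rfloor>"
    have "F (\<sigma> i) = F (\<sigma> j)" using eq by simp
    then have "real i - of_int \<lfloor>G (u + real i)\<rfloor> * of_int d = real j - of_int \<lfloor>G (u + real j)\<rfloor> * of_int d"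
      unfolding Fsig by simp
    then have "real_of_int (int i - int j) = real_of_int (q * d)" unfolding q_def by (simp add: algebra_simps)
    then have ij: "int i - int j = q * d" by (simp only: of_int_eq_iff)
    have "q = 0"
    proof (rule ccontr)
      assume "q \<noteq> 0"
      then have "\<bar>q * d\<bar> \<ge> d" using dpos by (simp add: abs_mult)
      moreover have "\<bar>int i - int j\<bar> < d" using i j by auto
      ultimately show False using ij by simp
    qed
    then show "i = j" using ij by simp
  qed
  have surj: "S \<subseteq> \<sigma> ` {..<nat d}"
  proof
    fix x assume "x \<in> S"
    then have x0: "0 \<le> x" and x1: "x < 1" and "F x - u \<in> \<int>" unfolding S_def by auto
    then obtain i where i: "F x - u = of_int i" by (auto elim: Ints_cases)
    define j where "j = nat (i mod d)"
    define q where "q = i div d"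
    have ij: "i = q * d + int j" unfolding j_def q_def using dpos by simp
    have jlt: "j < nat d" unfolding j_def using dpos by simp
    have "u + real j = F x + of_int (-q) * of_int d" using i ij by (simp add: algebra_simps)
    also have "\<dots> = F (x + of_int (- q))" by (rule F_shift[symmetric])
    finally have "G (u + real j) = x - of_int q" by simp
    moreover have "\<lfloor>x - of_int q\<rfloor> = - q" using x0 x1 by (simp add: floor_eq_iff)
    ultimately have "\<sigma> j = x" unfolding \<sigma>_def by simp
    then show "x \<in> \<sigma> ` {..<nat d}" using jlt by blast
  qed
  have bij: "bij_betw \<sigma> {..<nat d} S"
    unfolding bij_betw_def using inj inS surj by blast
  have val: "c (\<sigma> j) / F' (\<sigma> j) = hh c (u + real j)" for j
  proof -
    have "c (\<sigma> j) = c (G (u + real j))" unfolding \<sigma>_def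
      using periodic_int[of c 1 "G (u + real j)" "- \<lfloor>G (u + real j)\<rfloor>"] cper by simp
    moreover have "F' (\<sigma> j) = F' (G (u + real j))" unfolding \<sigma>_def
      using F'_shift[of "G (u + real j)" "- \<lfloor>G (u + real j)\<rfloor>"] by simp
    ultimately show ?thesis unfolding hh_def by simp
  qed
  have "transfer F F' c u = (\<Sum>x\<in>S. c x / F' x)" unfolding transfer_def S_def by simp
  also have "\<dots> = (\<Sum>j<nat d. c (\<sigma> j) / F' (\<sigma> j))"
    by (rule sum.reindex_bij_betw[OF bij, symmetric])
  also have "\<dots> = (\<Sum>j<nat d. hh c (u + real j))" using val by simp
  finally show ?thesis .
qed

lemma transfer_per: "transfer F F' c (u + 1) = transfer F F' c u"
proof -
  have "F x - (u + 1) \<in> \<int> \<longleftrightarrow> F x - u \<in> \<int>" for x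
  proof -
    have a: "F x - (u + 1) = (F x - u) - 1" and b: "F x - u = (F x - (u + 1)) + 1" by simp_all
    show ?thesis
    proof
      assume "F x - (u + 1) \<in> \<int>"
      then show "F x - u \<in> \<int>" unfolding b by (rule Ints_add[OF _ Ints_1])
    next
      assume "F x - u \<in> \<int>"
      then show "F x - (u + 1) \<in> \<int>" unfolding a by (rule Ints_diff[OF _ Ints_1])
    qed
  qed
  then show ?thesis unfolding transfer_def by simp
qed

lemma F'_nz: "F' x \<noteq> 0"
proof -
  have "F' x > 1" by (rule Fpos)
  then show ?thesis by simp
qed

lemma hh_cont:
  assumes "continuous_on UNIV c"
  shows "continuous_on UNIV (hh c)"
proof -
  have "continuous_on UNIV (\<lambda>v. c (G v) / F' (G v))"
    by (intro continuous_on_divide continuous_on_compose2[OF assms G_contOn]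
        continuous_on_compose2[OF contF' G_contOn]) (use F'_nz in auto)
  then show ?thesis unfolding hh_def[abs_def] .
qed

lemma hh_per:
  assumes cper: "\<And>x. c (x + 1) = c x"
  shows "hh c (v + of_int d) = hh c v"
proof -
  have "G (v + of_int d) = G v + 1" using G_shift[of v 1] by simp
  then show ?thesis unfolding hh_def using cper F'_per by simp
qed

lemma transfer_cont:
  assumes "continuous_on UNIV c" "\<And>x. c (x + 1) = c x"
  shows "continuous_on UNIV (transfer F F' c)"
proof -
  have "transfer F F' c = (\<lambda>u. \<Sum>j<nat d. hh c (u + real j))"
    using transfer_eq[of c, OF assms(2)] by auto
  moreover have "continuous_on UNIV (\<lambda>u. \<Sum>j<nat d. hh c (u + real j))"
    by (intro continuous_on_sum continuous_on_compose2[OF hh_cont[OF assms(1)]] continuous_intros) auto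
  ultimately show ?thesis by simp
qed

end


context circ begin

lemma per_d: fixes \<psi> :: "real \<Rightarrow> 'b" assumes "\<And>x. \<psi> (x + 1) = \<psi> x" shows "\<psi> (x + of_int d) = \<psi> x"
  using periodic_int[of \<psi> 1 x d] assms by simp

lemma duality:
  assumes c: "continuous_on UNIV c" and cper: "\<And>x. c (x + 1) = c x"
    and ps: "continuous_on UNIV \<psi>" and pper: "\<And>x. \<psi> (x + 1) = \<psi> x"
  shows "integral {0..1} (\<lambda>u. \<psi> u * transfer F F' c u) = integral {0..1} (\<lambda>y. \<psi> (F y) * c y)"
proof -
  define k where "k v = \<psi> v * hh c v" for v
  have kc: "continuous_on UNIV k" unfolding k_def[abs_def]
    by (intro continuous_on_mult ps hh_cont c)
  have dn: "real (nat d) = of_int d" using d_pos by simp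
  have psj: "\<psi> (u + real j) = \<psi> u" for u j
    using periodic_int[of \<psi> 1 u "int j"] pper by simp
  have "(\<lambda>u. \<psi> u * transfer F F' c u) = (\<lambda>u. \<Sum>j<nat d. k (u + real j))"
    unfolding transfer_eq[of c, OF cper] k_def by (auto simp: sum_distrib_left psj)
  then have "integral {0..1} (\<lambda>u. \<psi> u * transfer F F' c u) = integral {0..1} (\<lambda>u. \<Sum>j<nat d. k (u + real j))"
    by simp
  also have "\<dots> = (\<Sum>j<nat d. integral {0..1} (\<lambda>u. k (u + real j)))"
    by (rule integral_sum) (auto intro!: integrable_cont continuous_on_compose2[OF kc] continuous_intros)
  also have "\<dots> = (\<Sum>j<nat d. integral {0 + real j * 1 .. 0 + real (Suc j) * 1} k)"
  proof (rule sum.cong[OF refl])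
    fix j
    have "integral {0..1} (\<lambda>u. k (u + real j)) = integral {0..1} (k \<circ> (\<lambda>u. u + real j))"
      by (simp add: o_def)
    also have "\<dots> = integral {0 + real j .. 1 + real j} k"
      by (rule integral_shift) (auto intro: continuous_on_subset[OF kc])
    finally show "integral {0..1} (\<lambda>u. k (u + real j)) = integral {0 + real j * 1 .. 0 + real (Suc j) * 1} k"
      by (simp add: add.commute)
  qed
  also have "\<dots> = integral {0 .. 0 + real (nat d) * 1} k"
    by (rule partition_integral[OF kc]) simp
  also have "\<dots> = integral {F 0 .. F 0 + real (nat d)} k"
  proof -
    have "integral {F 0 .. F 0 + real (nat d)} k = integral {0..real (nat d)} k"
    proof (rule window_integral[OF kc])
      show "0 < real (nat d)" using d_pos by simp
      show "k (x + real (nat d)) = k x" for x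
        unfolding k_def dn using per_d[of \<psi>, OF pper] hh_per[of c, OF cper] by simp
    qed
    then show ?thesis by simp
  qed
  also have "F 0 + real (nat d) = F 1" using Fper[of 0] dn by simp
  also have "integral {F 0 .. F 1} k = integral {0..1} (\<lambda>x. F' x *\<^sub>R k (F x))"
  proof -
    have "((\<lambda>x. F' x *\<^sub>R k (F x)) has_integral integral {F 0..F 1} k) {0..1}"
    proof (rule has_integral_substitution[where a=0 and b=1 and g=F and c="F 0" and d="F 1" and f=k and g'=F'])
      show "F 0 \<le> F 1" using F_strict[of 0 1] by simp
      show "F ` {0..1} \<subseteq> {F 0..F 1}"
      proof clarsimp
        fix x :: real assume "0 \<le> x" "x \<le> 1"
        then show "F 0 \<le> F x \<and> F x \<le> F 1" using F_gap[of 0 x] F_gap[of x 1] by auto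
      qed
      show "continuous_on {F 0..F 1} k" using kc by (auto intro: continuous_on_subset)
      show "(F has_field_derivative F' x) (at x within {0..1})" for x
        using deriv has_field_derivative_at_within by blast
    qed simp
    then show ?thesis by (simp add: integral_unique)
  qed
  also have "(\<lambda>x. F' x *\<^sub>R k (F x)) = (\<lambda>y. \<psi> (F y) * c y)"
    unfolding k_def hh_def using F'_nz by (auto simp: field_simps)
  finally show ?thesis .
qed

lemma Tm_props:
  "continuous_on UNIV ((transfer F F' ^^ m) (\<lambda>_. 1)) \<and> (\<forall>x. (transfer F F' ^^ m) (\<lambda>_. 1) (x + 1) = (transfer F F' ^^ m) (\<lambda>_. 1) x)"
proof (induction m)
  case 0
  then show ?case by simp
next
  case (Suc m)
  then show ?case using transfer_cont transfer_per by simp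
qed

lemma comp_F_props:
  assumes ps: "continuous_on UNIV \<psi>" and pper: "\<And>x. \<psi> (x + 1) = \<psi> x"
  shows "continuous_on UNIV (\<lambda>x. \<psi> (F x))" "\<And>x. \<psi> (F (x + 1)) = \<psi> (F x)"
proof -
  show "continuous_on UNIV (\<lambda>x. \<psi> (F x))" by (rule continuous_on_compose2[OF ps F_contOn]) auto
  show "\<psi> (F (x + 1)) = \<psi> (F x)" for x unfolding Fper by (rule per_d[of \<psi>, OF pper])
qed

lemma iter_dual:
  assumes "continuous_on UNIV \<psi>" "\<And>x. \<psi> (x + 1) = \<psi> x"
  shows "integral {0..1} (\<lambda>y. \<psi> y * (transfer F F' ^^ m) (\<lambda>_. 1) y) = integral {0..1} (\<lambda>y. \<psi> ((F ^^ m) y))"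
  using assms
proof (induction m arbitrary: \<psi>)
  case 0
  then show ?case by simp
next
  case (Suc m)
  have "integral {0..1} (\<lambda>y. \<psi> y * (transfer F F' ^^ Suc m) (\<lambda>_. 1) y)
      = integral {0..1} (\<lambda>y. \<psi> y * transfer F F' ((transfer F F' ^^ m) (\<lambda>_. 1)) y)" by simp
  also have "\<dots> = integral {0..1} (\<lambda>y. \<psi> (F y) * (transfer F F' ^^ m) (\<lambda>_. 1) y)"
    using Tm_props[of m] Suc.prems by (intro duality) auto
  also have "\<dots> = integral {0..1} (\<lambda>y. \<psi> (F ((F ^^ m) y)))"
    by (rule Suc.IH) (use comp_F_props[OF Suc.prems] in auto)
  finally show ?case by simp
qed

end


lemma dist_S1_le: "dist_S1 x y \<le> \<bar>x - y - of_int k\<bar>"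
  unfolding dist_S1_def by (rule cINF_lower) (auto intro: bdd_belowI[of _ 0])

lemma dist_S1_lt: "dist_S1 x y < r \<Longrightarrow> \<exists>k::int. \<bar>x - y - of_int k\<bar> < r"
  unfolding dist_S1_def using cInf_lessD[of "range (\<lambda>k::int. \<bar>x - y - of_int k\<bar>)" r] by auto

lemma grid_near:
  assumes N: "N \<ge> 1"
  shows "\<exists>e\<in>E N. dist_S1 y e \<le> 1 / real N"
proof -
  define t where "t = y - of_int \<lfloor>y\<rfloor>"
  have t0: "0 \<le> t" and t1: "t < 1" unfolding t_def
    using real_of_int_floor_add_one_gt[of y] by (auto simp: algebra_simps)
  define j where "j = \<lceil>t * real N\<rceil>"
  have "0 \<le> t * real N" using t0 by simp
  then have j0: "j \<ge> 0" unfolding j_def by (metis ceiling_mono ceiling_zero)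
  have jN: "j \<le> int N" unfolding j_def using t1 N by (simp add: ceiling_le_iff)
  have jl: "real_of_int j - 1 < t * real N" "t * real N \<le> real_of_int j" unfolding j_def
    by linarith+
  show ?thesis
  proof (cases "j = 0")
    case True
    then have "t = 0" using jl t0 N by (simp add: mult_le_0_iff)
    have "1 \<in> E N" unfolding E_def using N by (auto intro!: exI[of _ N])
    moreover have "dist_S1 y 1 \<le> \<bar>y - 1 - of_int (\<lfloor>y\<rfloor> - 1)\<bar>" by (rule dist_S1_le)
    moreover have "\<bar>y - 1 - of_int (\<lfloor>y\<rfloor> - 1)\<bar> = 0" using \<open>t = 0\<close> unfolding t_def by simp
    moreover have "0 \<le> 1 / real N" by simp
    ultimately show ?thesis by (intro bexI[of _ 1]) linarith+
  next
    case False
    define i where "i = nat j"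
    have i: "1 \<le> i" "i \<le> N" "real i = real_of_int j" unfolding i_def using False j0 jN by auto
    have "real i / real N \<in> E N" unfolding E_def using i(1,2) by blast
    moreover have "dist_S1 y (real i / real N) \<le> \<bar>y - real i / real N - of_int \<lfloor>y\<rfloor>\<bar>" by (rule dist_S1_le)
    moreover have "\<bar>y - real i / real N - of_int \<lfloor>y\<rfloor>\<bar> \<le> 1 / real N"
    proof -
      have "y - real i / real N - of_int \<lfloor>y\<rfloor> = (t * real N - real_of_int j) / real N"
        unfolding t_def using N i(3) by (simp add: field_simps)
      moreover have "\<bar>t * real N - real_of_int j\<bar> \<le> 1" using jl by linarith
      ultimately show ?thesis using N by (simp add: divide_right_mono)
    qed
    ultimately show ?thesis by force
  qed
qed

lemma proj_close:
  assumes P: "is_projection P" and N: "N \<ge> 1"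
  shows "\<exists>k::int. \<bar>P N y - y - of_int k\<bar> < 2 / real N"
proof -
  obtain e where e: "e \<in> E N" "dist_S1 y e \<le> 1 / real N" using grid_near[OF N] by blast
  have "dist_S1 y (P N y) \<le> dist_S1 y e" using P N e(1) unfolding is_projection_def by blast
  also have "\<dots> < 2 / real N"
  proof -
    have "1 / real N < 2 / real N" using N by (simp add: divide_strict_right_mono)
    then show ?thesis using e(2) by linarith
  qed
  finally obtain k where "\<bar>y - P N y - of_int k\<bar> < 2 / real N" using dist_S1_lt by blast
  then have "\<bar>P N y - y - of_int (-k)\<bar> < 2 / real N" by (simp add: abs_minus_commute algebra_simps)
  then show ?thesis by blast
qed

lemma per_modulus:
  fixes \<phi> :: "real \<Rightarrow> real"
  assumes c: "continuous_on UNIV \<phi>" and per: "\<And>x. \<phi> (x + 1) = \<phi> x" and e: "e > 0"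
  shows "\<exists>\<delta>>0. \<forall>a b (k::int). \<bar>a - b - of_int k\<bar> < \<delta> \<longrightarrow> \<bar>\<phi> a - \<phi> b\<bar> < e"
proof -
  have "uniformly_continuous_on {-1..2} \<phi>"
    by (rule compact_uniformly_continuous) (auto intro: continuous_on_subset[OF c])
  then obtain \<delta>0 where d0: "\<delta>0 > 0" and uc: "\<And>x x'. x \<in> {-1..2} \<Longrightarrow> x' \<in> {-1..2} \<Longrightarrow> dist x' x < \<delta>0 \<Longrightarrow> dist (\<phi> x') (\<phi> x) < e"
    unfolding uniformly_continuous_on_def using e by metis
  have "\<bar>\<phi> a - \<phi> b\<bar> < e" if h: "\<bar>a - b - of_int k\<bar> < min \<delta>0 1" for a b k
  proof -
    define n where "n = \<lfloor>a\<rfloor>"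
    define a' where "a' = a - of_int n"
    define c' where "c' = b + of_int k - of_int n"
    have a'r: "0 \<le> a'" "a' < 1" unfolding a'_def n_def
      using real_of_int_floor_add_one_gt[of a] by (auto simp: algebra_simps)
    have "\<bar>a' - c'\<bar> < min \<delta>0 1" using h unfolding a'_def c'_def by (simp add: algebra_simps)
    then have c'r: "-1 \<le> c'" "c' \<le> 2" and dd: "dist c' a' < \<delta>0" using a'r by (auto simp: dist_real_def abs_minus_commute)
    have "\<phi> a = \<phi> a'" unfolding a'_def using periodic_int[of \<phi> 1 a "- n"] per by simp
    moreover have "\<phi> b = \<phi> c'" unfolding c'_def using periodic_int[of \<phi> 1 b "k - n"] per by (simp add: algebra_simps)
    moreover have "dist (\<phi> c') (\<phi> a') < e" using uc[of a' c'] a'r c'r dd by auto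
    ultimately show ?thesis by (simp add: dist_real_def abs_minus_commute)
  qed
  then show ?thesis using d0 by (intro exI[of _ "min \<delta>0 1"]) auto
qed



lemma piece_bound:
  fixes g :: "real \<Rightarrow> real"
  assumes ab: "a \<le> b" and g: "continuous_on UNIV g" and bd: "\<And>x. x \<in> {a..b} \<Longrightarrow> \<bar>g x - g b\<bar> \<le> e"
  shows "\<bar>integral {a..b} g - (b - a) * g b\<bar> \<le> e * (b - a)"
proof -
  have e0: "0 \<le> e" using bd[of b] ab by auto
  have "integral {a..b} (\<lambda>x. g x - g b) = integral {a..b} g - integral {a..b} (\<lambda>x. g b)"
    by (rule integral_diff) (auto intro: integrable_cont g)
  also have "integral {a..b} (\<lambda>x. g b) = (b - a) * g b" using ab by (simp add: content_real)
  finally have eq: "integral {a..b} (\<lambda>x. g x - g b) = integral {a..b} g - (b - a) * g b" .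
  have "((\<lambda>x. g x - g b) has_integral integral {a..b} (\<lambda>x. g x - g b)) (cbox a b)"
    by (simp add: integrable_integral integrable_cont g continuous_intros)
  from has_integral_bound[OF e0 this] bd ab
  have "norm (integral {a..b} (\<lambda>x. g x - g b)) \<le> e * (b - a)" by (auto simp: content_real cbox_interval)
  then show ?thesis using eq by simp
qed

lemma riemann:
  fixes g :: "real \<Rightarrow> real"
  assumes g: "continuous_on UNIV g"
  shows "(\<lambda>N. (\<Sum>i=1..N. g (real i / real N)) / real N) \<longlonglongrightarrow> integral {0..1} g"
proof (rule LIMSEQ_I)
  fix r :: real assume r: "r > 0"
  have "uniformly_continuous_on {0..1} g"
    by (rule compact_uniformly_continuous) (auto intro: continuous_on_subset[OF g])
  then obtain \<delta> where d: "\<delta> > 0" and uc: "\<And>x x'. x \<in> {0..1} \<Longrightarrow> x' \<in> {0..1} \<Longrightarrow> dist x' x < \<delta> \<Longrightarrow> dist (g x') (g x) < r / 2"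
    unfolding uniformly_continuous_on_def using r by (metis half_gt_zero)
  obtain N0 :: nat where N0: "1 / \<delta> < real N0" using reals_Archimedean2 by blast
  have "norm ((\<Sum>i=1..N. g (real i / real N)) / real N - integral {0..1} g) < r" if N: "N \<ge> max N0 1" for N
  proof -
    have N1: "N \<ge> 1" and NN0: "N \<ge> N0" using N by auto
    have Npos: "real N > 0" using N1 by simp
    have invN: "1 / real N < \<delta>"
    proof -
      have "1 / \<delta> < real N" using N0 NN0 by linarith
      then show ?thesis using d Npos by (simp add: field_simps)
    qed
    define s where "s = 1 / real N"
    have s0: "s \<ge> 0" unfolding s_def by simp
    have "integral {0..1} g = integral {0 .. 0 + real N * s} g" unfolding s_def using Npos by simp
    also have "\<dots> = (\<Sum>j<N. integral {0 + real j * s .. 0 + real (Suc j) * s} g)"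
      by (rule partition_integral[OF g s0, symmetric])
    finally have I: "integral {0..1} g = (\<Sum>j<N. integral {real j * s .. real (Suc j) * s} g)" by simp
    have R: "(\<Sum>i=1..N. g (real i / real N)) / real N = (\<Sum>j<N. s * g (real (Suc j) * s))"
      unfolding sum_bounds_lt_plus1[symmetric, of "\<lambda>i. g (real i / real N)"] s_def
      by (simp add: sum_divide_distrib)
    have piece: "\<bar>integral {real j * s .. real (Suc j) * s} g - s * g (real (Suc j) * s)\<bar> \<le> r / 2 * s"
      if j: "j < N" for j
    proof -
      have len: "real (Suc j) * s - real j * s = s" by (simp add: algebra_simps)
      have "\<bar>integral {real j * s .. real (Suc j) * s} g - (real (Suc j) * s - real j * s) * g (real (Suc j) * s)\<bar> \<le> r / 2 * (real (Suc j) * s - real j * s)"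
      proof (rule piece_bound[OF _ g])
        show "real j * s \<le> real (Suc j) * s" using s0 by (simp add: mult_right_mono)
        fix x assume x: "x \<in> {real j * s .. real (Suc j) * s}"
        have top: "real (Suc j) * s \<le> 1" unfolding s_def using j Npos by (simp add: field_simps)
        have "0 \<le> real j * s" using s0 by simp
        then have x01: "x \<in> {0..1}" using x top by auto
        have t01: "real (Suc j) * s \<in> {0..1}" using top s0 by auto
        have "dist x (real (Suc j) * s) < \<delta>" using x len invN unfolding dist_real_def s_def by auto
        then have "dist (g x) (g (real (Suc j) * s)) < r / 2" using uc[OF t01 x01] by simp
        then show "\<bar>g x - g (real (Suc j) * s)\<bar> \<le> r / 2" by (simp add: dist_real_def)
      qed
      then show ?thesis unfolding len .
    qed
    have "\<bar>(\<Sum>j<N. s * g (real (Suc j) * s)) - integral {0..1} g\<bar>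
        = \<bar>\<Sum>j<N. (integral {real j * s .. real (Suc j) * s} g - s * g (real (Suc j) * s))\<bar>"
      unfolding I sum_subtractf by (simp add: abs_minus_commute)
    also have "\<dots> \<le> (\<Sum>j<N. \<bar>integral {real j * s .. real (Suc j) * s} g - s * g (real (Suc j) * s)\<bar>)"
      by (rule sum_abs)
    also have "\<dots> \<le> (\<Sum>j<N. r / 2 * s)" by (rule sum_mono) (use piece in auto)
    also have "\<dots> = r / 2" unfolding s_def using Npos by simp
    also have "\<dots> < r" using r by simp
    finally show ?thesis unfolding R by simp
  qed
  then show "\<exists>no. \<forall>n\<ge>no. norm ((\<Sum>i=1..n. g (real i / real n)) / real n - integral {0..1} g) < r" by blast
qed

context circ begin

lemma iter_close:
  assumes P: "is_projection P"
  shows "\<exists>C. \<forall>N\<ge>1. \<forall>x. \<exists>k::int. \<bar>(discretization F P N ^^ m) x - (F ^^ m) x - of_int k\<bar> \<le> C / real N"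
proof (induction m)
  case 0
  show ?case by (intro exI[of _ 0] allI impI exI[of _ 0]) simp
next
  case (Suc m)
  then obtain C where C: "\<And>N x. N \<ge> 1 \<Longrightarrow> \<exists>k::int. \<bar>(discretization F P N ^^ m) x - (F ^^ m) x - of_int k\<bar> \<le> C / real N"
    by blast
  obtain B where B: "B > 0" "\<And>a b. \<bar>F a - F b\<bar> \<le> B * \<bar>a - b\<bar>" using F_lip by blast
  have "\<exists>k::int. \<bar>(discretization F P N ^^ Suc m) x - (F ^^ Suc m) x - of_int k\<bar> \<le> (2 + B * C) / real N"
    if N: "N \<ge> 1" for N x
  proof -
    define y where "y = (discretization F P N ^^ m) x"
    define z where "z = (F ^^ m) x"
    obtain k where k: "\<bar>y - z - of_int k\<bar> \<le> C / real N" using C[OF N] unfolding y_def z_def by blast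
    obtain k1 where k1: "\<bar>P N (F y) - F y - of_int k1\<bar> < 2 / real N" using proj_close[OF P N] by blast
    have "\<bar>F y - F (z + of_int k)\<bar> \<le> B * \<bar>y - (z + of_int k)\<bar>" by (rule B(2))
    also have "\<dots> \<le> B * (C / real N)" using k B(1) by (intro mult_left_mono) (auto simp: algebra_simps)
    finally have Fy: "\<bar>F y - (F z + of_int k * of_int d)\<bar> \<le> B * C / real N" unfolding F_shift by simp
    have "\<bar>P N (F y) - F z - of_int (k1 + k * d)\<bar> \<le> \<bar>P N (F y) - F y - of_int k1\<bar> + \<bar>F y - (F z + of_int k * of_int d)\<bar>"
      by (simp add: algebra_simps)
    also have "\<dots> \<le> 2 / real N + B * C / real N" using k1 Fy by linarith
    also have "\<dots> = (2 + B * C) / real N" by (simp add: add_divide_distrib)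
    finally show ?thesis unfolding y_def z_def discretization_def by (intro exI[of _ "k1 + k * d"]) simp
  qed
  then show ?case by blast
qed

lemma Fm_cont: "continuous_on UNIV (F ^^ m)"
proof (induction m)
  case 0
  then show ?case by (simp add: continuous_on_id id_def)
next
  case (Suc m)
  have "continuous_on UNIV (\<lambda>x. F ((F ^^ m) x))"
    by (rule continuous_on_compose2[OF F_contOn Suc.IH]) auto
  then show ?case by (simp add: o_def)
qed

end



theorem lemma6p5:
  fixes F F' :: "real \<Rightarrow> real" and P :: "nat \<Rightarrow> real \<Rightarrow> real" and m :: nat
  assumes "C1_expanding_lift F F'"
    and "is_projection P"
  shows "\<forall>\<phi>::real \<Rightarrow> real. continuous_on UNIV \<phi> \<and> (\<forall>x. \<phi> (x + 1) = \<phi> x) \<longrightarrow>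
           (\<lambda>N. pushforward_integral F P m N \<phi>)
             \<longlonglongrightarrow> integral {0..1} (\<lambda>y. \<phi> y * (transfer F F' ^^ m) (\<lambda>_. 1) y)"
proof (intro allI impI)
  fix \<phi> :: "real \<Rightarrow> real"
  assume "continuous_on UNIV \<phi> \<and> (\<forall>x. \<phi> (x + 1) = \<phi> x)"
  then have pc: "continuous_on UNIV \<phi>" and pper: "\<And>x. \<phi> (x + 1) = \<phi> x" by auto
  from assms(1) obtain d :: int where
    h: "\<forall>x. (F has_real_derivative F' x) (at x)" "continuous_on UNIV F'" "\<forall>x. F' x > 1"
       "\<forall>x. F (x + 1) = F x + real_of_int d"
    unfolding C1_expanding_lift_def by blast
  interpret circ F F' d using h by unfold_locales auto
  define g where "g y = \<phi> ((F ^^ m) y)" for y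
  have gc: "continuous_on UNIV g" unfolding g_def[abs_def]
    by (rule continuous_on_compose2[OF pc Fm_cont]) auto
  have target: "integral {0..1} (\<lambda>y. \<phi> y * (transfer F F' ^^ m) (\<lambda>_. 1) y) = integral {0..1} g"
    unfolding g_def by (rule iter_dual[OF pc pper])
  define R where "R N = (\<Sum>i=1..N. g (real i / real N)) / real N" for N :: nat
  have Rl: "R \<longlonglongrightarrow> integral {0..1} g" unfolding R_def by (rule riemann[OF gc])
  have Dl: "(\<lambda>N. pushforward_integral F P m N \<phi> - R N) \<longlonglongrightarrow> 0"
  proof (rule LIMSEQ_I)
    fix r :: real assume r: "r > 0"
    obtain \<delta> where d0: "\<delta> > 0" and mod: "\<And>a b (k::int). \<bar>a - b - of_int k\<bar> < \<delta> \<Longrightarrow> \<bar>\<phi> a - \<phi> b\<bar> < r / 2"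
      using per_modulus[OF pc pper, of "r / 2"] r by auto
    obtain C where C: "\<And>N x. N \<ge> 1 \<Longrightarrow> \<exists>k::int. \<bar>(discretization F P N ^^ m) x - (F ^^ m) x - of_int k\<bar> \<le> C / real N"
      using iter_close[OF assms(2), of m] by blast
    obtain N0 :: nat where N0: "(\<bar>C\<bar> + 1) / \<delta> < real N0" using reals_Archimedean2 by blast
    have "norm (pushforward_integral F P m N \<phi> - R N - 0) < r" if N: "N \<ge> max N0 1" for N
    proof -
      have N1: "N \<ge> 1" and NN0: "N \<ge> N0" using N by auto
      have Npos: "real N > 0" using N1 by simp
      have "\<bar>C\<bar> + 1 < \<delta> * real N0" using N0 d0 by (simp add: field_simps)
      also have "\<dots> \<le> \<delta> * real N" using NN0 d0 by simp
      finally have "\<bar>C\<bar> / real N < \<delta>" using Npos by (simp add: field_simps)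
      then have CN: "C / real N < \<delta>" using Npos by (smt (verit) divide_right_mono abs_ge_self)
      have each: "\<bar>\<phi> ((discretization F P N ^^ m) x) - g x\<bar> < r / 2" for x
      proof -
        obtain k where "\<bar>(discretization F P N ^^ m) x - (F ^^ m) x - of_int k\<bar> \<le> C / real N"
          using C[OF N1] by blast
        then have "\<bar>(discretization F P N ^^ m) x - (F ^^ m) x - of_int k\<bar> < \<delta>" using CN by linarith
        then show ?thesis unfolding g_def by (rule mod)
      qed
      have "pushforward_integral F P m N \<phi> - R N
          = (\<Sum>i=1..N. \<phi> ((discretization F P N ^^ m) (real i / real N)) - g (real i / real N)) / real N"
        unfolding pushforward_integral_def R_def by (simp add: sum_subtractf diff_divide_distrib)
      moreover have "\<bar>\<Sum>i=1..N. \<phi> ((discretization F P N ^^ m) (real i / real N)) - g (real i / real N)\<bar> \<le> real N * (r / 2)"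
      proof -
        have "\<bar>\<Sum>i=1..N. \<phi> ((discretization F P N ^^ m) (real i / real N)) - g (real i / real N)\<bar>
            \<le> (\<Sum>i=1..N. \<bar>\<phi> ((discretization F P N ^^ m) (real i / real N)) - g (real i / real N)\<bar>)"
          by (rule sum_abs)
        also have "\<dots> \<le> (\<Sum>i=1..N. r / 2)" by (rule sum_mono) (use each in \<open>simp add: less_imp_le\<close>)
        also have "\<dots> = real N * (r / 2)" by simp
        finally show ?thesis .
      qed
      ultimately have "\<bar>pushforward_integral F P m N \<phi> - R N\<bar> \<le> r / 2"
        using Npos by (simp add: abs_divide divide_le_eq mult.commute)
      then show ?thesis using r by simp
    qed
    then show "\<exists>no. \<forall>n\<ge>no. norm (pushforward_integral F P m n \<phi> - R n - 0) < r" by blast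
  qed
  have "(\<lambda>N. (pushforward_integral F P m N \<phi> - R N) + R N) \<longlonglongrightarrow> 0 + integral {0..1} g"
    by (rule tendsto_add[OF Dl Rl])
  then show "(\<lambda>N. pushforward_integral F P m N \<phi>) \<longlonglongrightarrow> integral {0..1} (\<lambda>y. \<phi> y * (transfer F F' ^^ m) (\<lambda>_. 1) y)"
    unfolding target by simp
qed


end
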